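(* For every $k\geq 2$, $q(G_k)=q(G'_k)=2$; moreover $q(G'_1)=2$. In particular, for each $k\ge 2$ there is a symmetric orthogonal matrix in $\mathcal{S}(G_k)$.
   Context: For a graph $G$ on $n$ vertices, $\mathcal{S}(G)$ is the set of real symmetric $n\times n$ matrices $A=[a_{ij}]$ with $a_{ij}\neq0$ for $i\ne j$ iff $\{i,j\}\in E(G)$ (diagonal unrestricted); $q(G)$ is the minimum number of distinct eigenvalues of a matrix in $\mathcal{S}(G)$. Double-ended candle: for $k\geq 2$, $G_k$ is the graph on $\{1,\dots,2k\}$ with levels $L_0=\{1\}$, $L_i=\{2i,2i+1\}$ ($1\le i\le k-1$), $L_k=\{2k\}$, where two vertices are adjacent iff they lie in consecutive levels. Single-ended candle: for $k\ge1$, $G'_k$ is the graph on $\{1,\dots,2k+1\}$ with levels $L_0=\{1\}$, $L_i=\{2i,2i+1\}$ ($1\le i\le k$), where vertices in consecutive levels are adjacent, additionally $2k$ and $2k+1$ are adjacent, and there are no other edges ($G'_1=K_3$). *)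

theory Defs
  imports "Jordan_Normal_Form.Char_Poly"
begin

text \<open>A simple graph on vertex set {1..n} is given by its order n and an adjacency
relation E on nat (only its restriction to {1..n} matters).
A real n x n matrix has rows/columns indexed 0..n-1; vertex i corresponds to index i-1.\<close>

definition S_G :: "nat \<Rightarrow> (nat \<Rightarrow> nat \<Rightarrow> bool) \<Rightarrow> real mat set" where
  "S_G n E = {A. A \<in> carrier_mat n n \<and> transpose_mat A = A \<and>
      (\<forall>i\<in>{1..n}. \<forall>j\<in>{1..n}. i \<noteq> j \<longrightarrow> (A $$ (i - 1, j - 1) \<noteq> 0 \<longleftrightarrow> E i j))}"

definition num_distinct_eigs :: "real mat \<Rightarrow> nat" where
  "num_distinct_eigs A = card {c. eigenvalue A c}"

definition q_G :: "nat \<Rightarrow> (nat \<Rightarrow> nat \<Rightarrow> bool) \<Rightarrow> nat" where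
  "q_G n E = (LEAST m. \<exists>A\<in>S_G n E. num_distinct_eigs A = m)"

text \<open>Levels: L_0 = {1}, L_i = {2i, 2i+1}, and (double-ended) L_k = {2k};
in all cases the level of vertex v is v div 2.\<close>
definition candle_level :: "nat \<Rightarrow> nat" where
  "candle_level v = v div 2"

definition dcandle :: "nat \<Rightarrow> nat \<Rightarrow> nat \<Rightarrow> bool" where
  "dcandle k u v = (u \<in> {1..2*k} \<and> v \<in> {1..2*k} \<and>
      (candle_level u = candle_level v + 1 \<or> candle_level v = candle_level u + 1))"

definition scandle :: "nat \<Rightarrow> nat \<Rightarrow> nat \<Rightarrow> bool" where
  "scandle k u v = (u \<in> {1..2*k+1} \<and> v \<in> {1..2*k+1} \<and>
      (candle_level u = candle_level v + 1 \<or> candle_level v = candle_level u + 1 \<or>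
       {u, v} = {2*k, 2*k+1}))"

end

theory Submission
  imports Defs "Jordan_Normal_Form.Jordan_Normal_Form_Existence"
begin


lemma sym_entry: assumes "transpose_mat A = A" "A \<in> carrier_mat n n" "i < n" "j < n"
  shows "A $$ (i,j) = A $$ (j,i)"
proof -
  have "transpose_mat A $$ (i,j) = A $$ (j,i)" using assms by (intro index_transpose_mat(1)) auto
  thus ?thesis using assms(1) by simp
qed

lemma sym_eig_real:
  fixes A :: "real mat"
  assumes A: "A \<in> carrier_mat n n" and sym: "transpose_mat A = A"
    and ev: "eigenvalue (map_mat complex_of_real A) a"
  shows "Im a = 0"
proof -
  let ?C = "map_mat complex_of_real A"
  from ev obtain v where v: "v \<in> carrier_vec n" "v \<noteq> 0\<^sub>v n" "?C *\<^sub>v v = a \<cdot>\<^sub>v v"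
    unfolding eigenvalue_def eigenvector_def using A by auto
  have comp: "(\<Sum>j<n. complex_of_real (A $$ (i,j)) * v $ j) = a * v $ i" if i: "i < n" for i
  proof -
    have "row ?C i \<bullet> v = (?C *\<^sub>v v) $ i" using i A by simp
    also have "\<dots> = (a \<cdot>\<^sub>v v) $ i" using v(3) by simp
    also have "\<dots> = a * v $ i" using v(1) i by simp
    finally have "row ?C i \<bullet> v = a * v $ i" .
    thus ?thesis using i A v by (auto simp: scalar_prod_def lessThan_atLeast0)
  qed
  define s where "s = (\<Sum>i<n. \<Sum>j<n. cnj (v $ i) * complex_of_real (A $$ (i,j)) * v $ j)"
  define N where "N = (\<Sum>i<n. cnj (v $ i) * v $ i)"
  have sN: "s = a * N"
  proof -
    have "s = (\<Sum>i<n. cnj (v $ i) * (\<Sum>j<n. complex_of_real (A $$ (i,j)) * v $ j))"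
      unfolding s_def by (simp add: sum_distrib_left mult.assoc)
    also have "\<dots> = (\<Sum>i<n. cnj (v $ i) * (a * v $ i))" using comp by simp
    also have "\<dots> = a * N" unfolding N_def by (simp add: sum_distrib_left algebra_simps)
    finally show ?thesis .
  qed
  have "cnj s = (\<Sum>i<n. \<Sum>j<n. v $ i * complex_of_real (A $$ (i,j)) * cnj (v $ j))"
    unfolding s_def by (simp add: cnj_sum)
  also have "\<dots> = (\<Sum>j<n. \<Sum>i<n. v $ i * complex_of_real (A $$ (i,j)) * cnj (v $ j))"
    by (rule sum.swap)
  also have "\<dots> = s" unfolding s_def
    by (intro sum.cong refl, subst sym_entry[OF sym A], auto simp: algebra_simps)
  finally have cs: "cnj s = s" .
  have Nr: "N = complex_of_real (\<Sum>i<n. (cmod (v $ i))\<^sup>2)"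
    unfolding N_def of_real_sum
    by (intro sum.cong refl) (simp add: complex_norm_square mult.commute del: of_real_power)
  obtain i where i: "i < n" "v $ i \<noteq> 0" using v
    by (metis eq_vecI carrier_vecD index_zero_vec(1) index_zero_vec(2))
  have "(\<Sum>i<n. (cmod (v $ i))\<^sup>2) > 0"
    by (rule sum_pos2[of _ i], insert i, auto)
  hence N0: "N \<noteq> 0" and cN: "cnj N = N" unfolding Nr by (simp_all del: of_real_power of_real_sum)
  have "cnj a * N = a * N" using cs sN cN by (metis complex_cnj_mult)
  hence "cnj a = a" using N0 by simp
  thus ?thesis by (metis Reals_cnj_iff complex_is_Real_iff)
qed

interpretation of_real_poly_hom: map_poly_comm_ring_hom "of_real :: real \<Rightarrow> complex" ..

lemma poly_lin_prod_zero: "poly (\<Prod>a\<leftarrow>as. [:-a, 1:]) x = (0::'a::idom) \<longleftrightarrow> x \<in> set as"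
  by (induct as) auto

lemma sym_char_poly_split:
  fixes A :: "real mat"
  assumes A: "A \<in> carrier_mat n n" and sym: "transpose_mat A = A"
  shows "\<exists>es. char_poly A = (\<Prod>e\<leftarrow>es. [:-e, 1:])"
proof -
  let ?C = "map_mat complex_of_real A"
  have C: "?C \<in> carrier_mat n n" using A by simp
  obtain as where cp: "char_poly ?C = (\<Prod>a\<leftarrow>as. [:-a, 1:])"
    using char_poly_factorized[OF C] by blast
  have re: "\<forall>a\<in>set as. Im a = 0"
  proof
    fix a assume "a \<in> set as"
    hence "poly (char_poly ?C) a = 0" unfolding cp by (simp add: poly_lin_prod_zero)
    hence "eigenvalue ?C a" using eigenvalue_root_char_poly[OF C] by simp
    thus "Im a = 0" by (rule sym_eig_real[OF A sym])
  qed
  have "map_poly complex_of_real (\<Prod>e\<leftarrow>map Re as. [:-e, 1:]) = (\<Prod>a\<leftarrow>as. [:-a, 1:])"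
    using re
  proof (induct as)
    case Nil thus ?case by simp
  next
    case (Cons a as)
    have ra: "complex_of_real (Re a) = a" using Cons(2) by (simp add: complex_eq_iff)
    have IH: "map_poly complex_of_real (\<Prod>e\<leftarrow>map Re as. [:-e, 1:]) = (\<Prod>a\<leftarrow>as. [:-a, 1:])"
      using Cons by simp
    have "map_poly complex_of_real (\<Prod>e\<leftarrow>map Re (a # as). [:-e, 1:])
       = map_poly complex_of_real [:-Re a, 1:] * map_poly complex_of_real (\<Prod>e\<leftarrow>map Re as. [:-e, 1:])"
      by (simp only: list.map prod_list.Cons of_real_poly_hom.hom_mult)
    also have "map_poly complex_of_real [:-Re a, 1:] = [:-a, 1:]" using ra by simp
    finally show ?case using IH by simp
  qed
  hence eq: "map_poly complex_of_real (char_poly A) = map_poly complex_of_real (\<Prod>e\<leftarrow>map Re as. [:-e, 1:])"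
    using cp of_real_hom.char_poly_hom[OF A] by metis
  have "char_poly A = (\<Prod>e\<leftarrow>map Re as. [:-e, 1:])"
  proof (rule poly_eqI)
    fix i
    from arg_cong[OF eq, of "\<lambda>p. coeff p i"] show "coeff (char_poly A) i = coeff (\<Prod>e\<leftarrow>map Re as. [:-e, 1:]) i"
      by (simp add: coeff_map_poly)
  qed
  thus ?thesis by blast
qed

lemma sym_sq_zero:
  fixes C :: "real mat"
  assumes C: "C \<in> carrier_mat n n" and sym: "transpose_mat C = C" and z: "C * C = 0\<^sub>m n n"
  shows "C = 0\<^sub>m n n"
proof (rule eq_matI)
  fix i j assume i: "i < dim_row (0\<^sub>m n n :: real mat)" and j: "j < dim_col (0\<^sub>m n n :: real mat)"
  hence i: "i < n" and j: "j < n" by auto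
  have "(C * C) $$ (i,i) = (\<Sum>k\<in>{0..<n}. C $$ (i,k) * C $$ (k,i))"
    using C i by (simp add: scalar_prod_def)
  also have "\<dots> = (\<Sum>k\<in>{0..<n}. (C $$ (i,k))\<^sup>2)"
  proof (intro sum.cong refl)
    fix k assume "k \<in> {0..<n}"
    hence "C $$ (k,i) = C $$ (i,k)" using sym_entry[OF sym C] i by auto
    thus "C $$ (i,k) * C $$ (k,i) = (C $$ (i,k))\<^sup>2" by (simp add: power2_eq_square)
  qed
  finally have "(\<Sum>k\<in>{0..<n}. (C $$ (i,k))\<^sup>2) = 0" using z i by simp
  hence "\<forall>k\<in>{0..<n}. (C $$ (i,k))\<^sup>2 = 0"
    by (subst sum_nonneg_eq_0_iff[symmetric]) auto
  thus "C $$ (i,j) = 0\<^sub>m n n $$ (i,j)" using i j by auto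
qed (insert C, auto)

lemma pow_mat_add: assumes C: "C \<in> carrier_mat n n"
  shows "C ^\<^sub>m a * C ^\<^sub>m b = C ^\<^sub>m (a + b)"
proof (induct b)
  case 0 thus ?case using C by simp
next
  case (Suc b)
  have "C ^\<^sub>m a * C ^\<^sub>m Suc b = C ^\<^sub>m a * (C ^\<^sub>m b * C)" by simp
  also have "\<dots> = (C ^\<^sub>m a * C ^\<^sub>m b) * C"
    by (rule assoc_mult_mat[symmetric], insert C, auto)
  finally show ?case using Suc by simp
qed

lemma pow_mat_sym: fixes C :: "real mat" assumes C: "C \<in> carrier_mat n n" and sym: "transpose_mat C = C"
  shows "transpose_mat (C ^\<^sub>m k) = C ^\<^sub>m k"
proof (induct k)
  case 0 thus ?case using C by simp
next
  case (Suc k)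
  have "transpose_mat (C ^\<^sub>m Suc k) = transpose_mat C * transpose_mat (C ^\<^sub>m k)"
    using transpose_mult[OF pow_carrier_mat[OF C, of k] C] by simp
  also have "\<dots> = C ^\<^sub>m 1 * C ^\<^sub>m k" using Suc sym C by simp
  also have "\<dots> = C ^\<^sub>m (1 + k)" by (rule pow_mat_add[OF C])
  also have "\<dots> = C ^\<^sub>m Suc k" by simp
  finally show ?case .
qed

lemma nilp_sym: fixes C :: "real mat"
  assumes C: "C \<in> carrier_mat n n" and sym: "transpose_mat C = C"
  shows "C ^\<^sub>m Suc m = 0\<^sub>m n n \<Longrightarrow> C = 0\<^sub>m n n"
proof (induct m)
  case 0 thus ?case using C by simp
next
  case (Suc m)
  let ?D = "C ^\<^sub>m Suc m"
  have D: "?D \<in> carrier_mat n n" by (rule pow_carrier_mat[OF C])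
  have "?D * ?D = C ^\<^sub>m (Suc m + Suc m)" by (rule pow_mat_add[OF C])
  also have "Suc m + Suc m = Suc (Suc m) + m" by simp
  also have "C ^\<^sub>m (Suc (Suc m) + m) = C ^\<^sub>m (Suc (Suc m)) * C ^\<^sub>m m" by (rule pow_mat_add[OF C, symmetric])
  also have "\<dots> = 0\<^sub>m n n * C ^\<^sub>m m" by (subst Suc(2)) (rule refl)
  also have "\<dots> = 0\<^sub>m n n" by (rule left_mult_zero_mat, rule pow_carrier_mat[OF C])
  finally have "?D = 0\<^sub>m n n" by (intro sym_sq_zero[OF D pow_mat_sym[OF C sym]])
  thus ?case by (rule Suc(1))
qed

lemma diag_block_zero: "diag_block_mat (map (\<lambda>(na,a). 0\<^sub>m na na) xs)
   = (0\<^sub>m (sum_list (map fst xs)) (sum_list (map fst xs)) :: 'a :: zero mat)"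
  by (induct xs) (auto simp: Let_def)

lemma nilp_from_cp:
  fixes B :: "real mat"
  assumes B: "B \<in> carrier_mat n n" and cp: "char_poly B = (\<Prod>e\<leftarrow>es. [:-e, 1:])"
    and es: "set es \<subseteq> {0}"
  shows "B ^\<^sub>m n = 0\<^sub>m n n"
proof -
  obtain n_as where jnf: "jordan_nf B n_as" using jordan_nf_exists[OF B cp] by blast
  obtain P Q where P: "P \<in> carrier_mat n n" and Q: "Q \<in> carrier_mat n n"
    and cp2: "char_poly B = (\<Prod>(na, a)\<leftarrow>n_as. [:- a, 1:] ^ na)"
    and pw: "\<And>k. B ^\<^sub>m k = P * (jordan_matrix n_as) ^\<^sub>m k * Q"
    using jordan_nf_powE[OF B jnf] by blast
  from jnf have pos: "0 \<notin> fst ` set n_as" and sim: "similar_mat B (jordan_matrix n_as)"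
    unfolding jordan_nf_def by auto
  from similar_matD[OF sim] obtain m where "{B, jordan_matrix n_as} \<subseteq> carrier_mat m m" by blast
  hence "dim_row (jordan_matrix n_as) = dim_row B" by (metis carrier_matD(1) insert_subset)
  hence sumn: "sum_list (map fst n_as) = n" using B by simp
  have blk: "jordan_block na a ^\<^sub>m n = 0\<^sub>m na na" if mem: "(na, a) \<in> set n_as" for na a
  proof -
    have "na \<noteq> 0" using pos mem by force
    have "poly ([:- a, 1:] ^ na) a = 0" using \<open>na \<noteq> 0\<close> by simp
    hence "poly (char_poly B) a = 0" unfolding cp2 using mem
      by (auto simp: poly_prod_list prod_list_zero_iff intro!: image_eqI[of _ _ "(na,a)"])
    hence "a \<in> set es" unfolding cp poly_lin_prod_zero .
    hence a0: "a = 0" using es by auto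
    have nale: "na \<le> n" using sumn mem member_le_sum_list[of na "map fst n_as"] by force
    show ?thesis unfolding a0 jordan_block_zero_pow
      by (rule eq_matI) (insert nale, auto)
  qed
  have "jordan_matrix n_as ^\<^sub>m n = diag_block_mat (map (\<lambda>(na,a). 0\<^sub>m na na) n_as)"
    unfolding jordan_matrix_pow using blk by (intro arg_cong[of _ _ diag_block_mat]) auto
  also have "\<dots> = 0\<^sub>m n n" unfolding diag_block_zero sumn ..
  finally have "B ^\<^sub>m n = P * 0\<^sub>m n n * Q" using pw by simp
  also have "\<dots> = 0\<^sub>m n n" using P Q by simp
  finally show ?thesis .
qed

lemma eig_set: fixes A :: "real mat"
  assumes A: "A \<in> carrier_mat n n" and cp: "char_poly A = (\<Prod>e\<leftarrow>es. [:-e, 1:])"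
  shows "{c. eigenvalue A c} = set es"
  using eigenvalue_root_char_poly[OF A] unfolding cp poly_lin_prod_zero by auto

lemma two_eigs:
  fixes A :: "real mat"
  assumes A: "A \<in> carrier_mat n n" and sym: "transpose_mat A = A"
    and ij: "i < n" "j < n" "i \<noteq> j" "A $$ (i,j) \<noteq> 0"
  shows "finite {c. eigenvalue A c} \<and> card {c. eigenvalue A c} \<ge> 2"
proof -
  obtain es where cp: "char_poly A = (\<Prod>e\<leftarrow>es. [:-e, 1:])"
    using sym_char_poly_split[OF A sym] by blast
  note E = eig_set[OF A cp]
  have "card (set es) \<ge> 2"
  proof (rule ccontr)
    assume "\<not> card (set es) \<ge> 2"
    hence "card (set es) \<le> Suc 0" by simp
    hence one: "\<forall>a1\<in>set es. \<forall>a2\<in>set es. a1 = a2" by (simp add: card_le_Suc0_iff_eq)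
    obtain c where c: "set es \<subseteq> {c}"
    proof (cases es)
      case Nil thus ?thesis using that by auto
    next
      case (Cons e es') thus ?thesis using that[of e] one by auto
    qed
    define B where "B = mat n n (\<lambda>(k,l). A $$ (k,l) - (if k = l then c else 0))"
    have B: "B \<in> carrier_mat n n" unfolding B_def by simp
    have symB: "transpose_mat B = B"
      by (rule eq_matI, insert sym_entry[OF sym A], auto simp: B_def)
    obtain es' where cp': "char_poly B = (\<Prod>e\<leftarrow>es'. [:-e, 1:])"
      using sym_char_poly_split[OF B symB] by blast
    have "set es' \<subseteq> {0}"
    proof
      fix d assume "d \<in> set es'"
      hence "eigenvalue B d" using eig_set[OF B cp'] by auto
      then obtain v where v: "v \<in> carrier_vec n" "v \<noteq> 0\<^sub>v n" "B *\<^sub>v v = d \<cdot>\<^sub>v v"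
        unfolding eigenvalue_def eigenvector_def using B by auto
      have "A *\<^sub>v v = (d + c) \<cdot>\<^sub>v v"
      proof (rule eq_vecI)
        fix k assume "k < dim_vec ((d + c) \<cdot>\<^sub>v v)"
        hence k: "k < n" using v by auto
        have "(B *\<^sub>v v) $ k = (\<Sum>l\<in>{0..<n}. (A $$ (k,l) - (if k = l then c else 0)) * v $ l)"
          using k v(1) by (simp add: B_def scalar_prod_def)
        also have "\<dots> = (\<Sum>l\<in>{0..<n}. A $$ (k,l) * v $ l) - (\<Sum>l\<in>{0..<n}. (if k = l then c * v $ l else 0))"
          by (subst sum_subtractf[symmetric], intro sum.cong refl) (simp add: left_diff_distrib)
        also have "\<dots> = (A *\<^sub>v v) $ k - c * v $ k"
          using k v(1) A by (simp add: scalar_prod_def sum.delta)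
        finally have "(A *\<^sub>v v) $ k = (B *\<^sub>v v) $ k + c * v $ k" by simp
        also have "\<dots> = d * v $ k + c * v $ k" using v(3) k v(1) by simp
        finally show "(A *\<^sub>v v) $ k = ((d + c) \<cdot>\<^sub>v v) $ k" using k v(1) by (simp add: algebra_simps)
      qed (insert A v, auto)
      hence "eigenvalue A (d + c)" unfolding eigenvalue_def eigenvector_def using A v by auto
      hence "d + c \<in> set es" using E by auto
      thus "d \<in> {0}" using c by auto
    qed
    from nilp_from_cp[OF B cp' this] have "B ^\<^sub>m n = 0\<^sub>m n n" .
    moreover obtain m where n: "n = Suc m" using ij by (cases n) auto
    ultimately have "B = 0\<^sub>m n n" using nilp_sym[OF B symB] by simp
    hence "B $$ (i,j) = 0" using ij by simp
    thus False using ij by (simp add: B_def)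
  qed
  thus ?thesis unfolding E by simp
qed



definition xp :: "(nat \<Rightarrow> nat) \<Rightarrow> (nat \<Rightarrow> real) \<Rightarrow> (nat \<Rightarrow> real) \<Rightarrow> nat \<Rightarrow> nat \<Rightarrow> real" where
  "xp lev al be u v = (if lev v = lev u + 1 then be u * al v else 0)"

definition dp :: "(nat \<Rightarrow> nat) \<Rightarrow> (nat \<Rightarrow> real) \<Rightarrow> nat \<Rightarrow> nat \<Rightarrow> nat \<Rightarrow> real" where
  "dp lev ga K u v = (if lev u = K \<and> lev v = K then ga u * ga v else 0)"

definition gent :: "(nat \<Rightarrow> nat) \<Rightarrow> (nat \<Rightarrow> real) \<Rightarrow> (nat \<Rightarrow> real) \<Rightarrow> (nat \<Rightarrow> real) \<Rightarrow> nat \<Rightarrow> nat \<Rightarrow> nat \<Rightarrow> real" where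
  "gent lev al be ga K u v = xp lev al be u v + xp lev al be v u + dp lev ga K u v"

definition LS :: "(nat \<Rightarrow> nat) \<Rightarrow> nat set \<Rightarrow> nat \<Rightarrow> (nat \<Rightarrow> real) \<Rightarrow> real" where
  "LS lev V L h = (\<Sum>v\<in>{v\<in>V. lev v = L}. h v)"

lemma sum_lev: assumes "finite V"
  shows "(\<Sum>v\<in>V. if lev v = L then c * h v else 0) = c * LS lev V L h"
  unfolding LS_def using assms by (simp add: sum.inter_filter[symmetric] sum_distrib_left)

lemma gent_sq: assumes V: "finite V"
  shows "(\<Sum>v\<in>V. gent lev al be ga K u v * gent lev al be ga K v w) =
     (if lev w = lev u + 2 then be u * al w else 0) * LS lev V (lev u + 1) (\<lambda>v. al v * be v)
   + (if lev w = lev u then be u * be w else 0) * LS lev V (lev u + 1) (\<lambda>v. al v * al v)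
   + (if lev w = K \<and> lev u + 1 = K then be u * ga w else 0) * LS lev V (lev u + 1) (\<lambda>v. al v * ga v)
   + (if lev u \<ge> 1 \<and> lev w = lev u then al u * al w else 0) * LS lev V (lev u - 1) (\<lambda>v. be v * be v)
   + (if lev u \<ge> 1 \<and> lev w + 2 = lev u then al u * be w else 0) * LS lev V (lev u - 1) (\<lambda>v. be v * al v)
   + (if lev u = K + 1 \<and> lev w = K then al u * ga w else 0) * LS lev V K (\<lambda>v. be v * ga v)
   + (if lev u = K \<and> lev w = K + 1 then ga u * al w else 0) * LS lev V K (\<lambda>v. ga v * be v)
   + (if lev u = K \<and> lev w + 1 = K then ga u * be w else 0) * LS lev V K (\<lambda>v. ga v * al v)
   + (if lev u = K \<and> lev w = K then ga u * ga w else 0) * LS lev V K (\<lambda>v. ga v * ga v)"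
proof -
  let ?X = "xp lev al be" and ?D = "dp lev ga K"
  have pt: "gent lev al be ga K u v * gent lev al be ga K v w =
     (if lev v = lev u + 1 then (if lev w = lev u + 2 then be u * al w else 0) * (al v * be v) else 0)
   + (if lev v = lev u + 1 then (if lev w = lev u then be u * be w else 0) * (al v * al v) else 0)
   + (if lev v = lev u + 1 then (if lev w = K \<and> lev u + 1 = K then be u * ga w else 0) * (al v * ga v) else 0)
   + (if lev v = lev u - 1 then (if lev u \<ge> 1 \<and> lev w = lev u then al u * al w else 0) * (be v * be v) else 0)
   + (if lev v = lev u - 1 then (if lev u \<ge> 1 \<and> lev w + 2 = lev u then al u * be w else 0) * (be v * al v) else 0)
   + (if lev v = K then (if lev u = K + 1 \<and> lev w = K then al u * ga w else 0) * (be v * ga v) else 0)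
   + (if lev v = K then (if lev u = K \<and> lev w = K + 1 then ga u * al w else 0) * (ga v * be v) else 0)
   + (if lev v = K then (if lev u = K \<and> lev w + 1 = K then ga u * be w else 0) * (ga v * al v) else 0)
   + (if lev v = K then (if lev u = K \<and> lev w = K then ga u * ga w else 0) * (ga v * ga v) else 0)"
    for v
  proof -
    have 1: "?X u v * ?X v w = (if lev v = lev u + 1 then (if lev w = lev u + 2 then be u * al w else 0) * (al v * be v) else 0)"
      unfolding xp_def by auto
    have 2: "?X u v * ?X w v = (if lev v = lev u + 1 then (if lev w = lev u then be u * be w else 0) * (al v * al v) else 0)"
      unfolding xp_def by auto
    have 3: "?X u v * ?D v w = (if lev v = lev u + 1 then (if lev w = K \<and> lev u + 1 = K then be u * ga w else 0) * (al v * ga v) else 0)"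
      unfolding xp_def dp_def by auto
    have 4: "?X v u * ?X v w = (if lev v = lev u - 1 then (if lev u \<ge> 1 \<and> lev w = lev u then al u * al w else 0) * (be v * be v) else 0)"
      unfolding xp_def by auto
    have 5: "?X v u * ?X w v = (if lev v = lev u - 1 then (if lev u \<ge> 1 \<and> lev w + 2 = lev u then al u * be w else 0) * (be v * al v) else 0)"
      unfolding xp_def by auto
    have 6: "?X v u * ?D v w = (if lev v = K then (if lev u = K + 1 \<and> lev w = K then al u * ga w else 0) * (be v * ga v) else 0)"
      unfolding xp_def dp_def by auto
    have 7: "?D u v * ?X v w = (if lev v = K then (if lev u = K \<and> lev w = K + 1 then ga u * al w else 0) * (ga v * be v) else 0)"
      unfolding xp_def dp_def by auto
    have 8: "?D u v * ?X w v = (if lev v = K then (if lev u = K \<and> lev w + 1 = K then ga u * be w else 0) * (ga v * al v) else 0)"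
      unfolding xp_def dp_def by auto
    have 9: "?D u v * ?D v w = (if lev v = K then (if lev u = K \<and> lev w = K then ga u * ga w else 0) * (ga v * ga v) else 0)"
      unfolding dp_def by auto
    have "gent lev al be ga K u v * gent lev al be ga K v w =
      ?X u v * ?X v w + ?X u v * ?X w v + ?X u v * ?D v w
    + ?X v u * ?X v w + ?X v u * ?X w v + ?X v u * ?D v w
    + ?D u v * ?X v w + ?D u v * ?X w v + ?D u v * ?D v w"
      unfolding gent_def by (simp add: algebra_simps)
    thus ?thesis unfolding 1 2 3 4 5 6 7 8 9 .
  qed
  show ?thesis unfolding pt sum.distrib sum_lev[OF V] ..
qed

lemma div2_cases: "(u::nat) div 2 = L \<Longrightarrow> u = 2*L \<or> u = 2*L+1" by auto

lemma lvlD_mid: "1 \<le> L \<Longrightarrow> L < k \<Longrightarrow> {v\<in>{1..2*k}. candle_level v = L} = {2*L, 2*L+1}"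
  unfolding candle_level_def by auto
lemma lvlD_0: "1 \<le> k \<Longrightarrow> {v\<in>{1..2*k}. candle_level v = 0} = {1}"
  unfolding candle_level_def by auto
lemma lvlD_k: "1 \<le> k \<Longrightarrow> {v\<in>{1..2*k}. candle_level v = k} = {2*k}"
  unfolding candle_level_def by auto
lemma lvlD_big: "k < L \<Longrightarrow> {v\<in>{1..2*k}. candle_level v = L} = {}"
  unfolding candle_level_def by auto

definition alD :: "nat \<Rightarrow> nat \<Rightarrow> real" where
  "alD k v = (if v = 2*k then 1 else if even v then 3/5 else 4/5)"
definition beC :: "nat \<Rightarrow> real" where
  "beC v = (if v = 1 then 1 else if even v then 4/5 else -3/5)"

lemma MD_sq:
  assumes k: "k \<ge> 2" and u: "u \<in> {1..2*k}" and w: "w \<in> {1..2*k}"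
  shows "(\<Sum>v\<in>{1..2*k}. gent candle_level (alD k) beC (\<lambda>_. 0) 0 u v * gent candle_level (alD k) beC (\<lambda>_. 0) 0 v w)
     = (if u = w then 1 else 0)"
proof -
  let ?l = candle_level
  let ?V = "{1..2*k}"
  have k1: "1 \<le> k" using k by simp
  have ab: "LS ?l ?V L (\<lambda>v. alD k v * beC v) = 0" "LS ?l ?V L (\<lambda>v. beC v * alD k v) = 0"
    if "1 \<le> L" "L < k" for L
    using that unfolding LS_def lvlD_mid[OF that] by (auto simp: alD_def beC_def)
  have aa: "LS ?l ?V L (\<lambda>v. alD k v * alD k v) = (if L > k then 0 else 1)" if L1: "1 \<le> L" for L
  proof -
    consider "1 \<le> L" "L < k" | "L = k" | "L > k" using L1 by linarith
    thus ?thesis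
    proof cases
      case 1 thus ?thesis unfolding LS_def lvlD_mid[OF 1] by (auto simp: alD_def)
    next
      case 2 thus ?thesis using k unfolding LS_def 2 lvlD_k[of k, OF k1] by (auto simp: alD_def)
    next
      case 3 thus ?thesis unfolding LS_def lvlD_big[OF 3] by auto
    qed
  qed
  have bb: "LS ?l ?V L (\<lambda>v. beC v * beC v) = 1" if L1: "L < k" for L
  proof -
    consider "L = 0" | "1 \<le> L" "L < k" using L1 by linarith
    thus ?thesis
    proof cases
      case 1 thus ?thesis using k unfolding LS_def 1 lvlD_0[of k, OF k1] by (auto simp: beC_def)
    next
      case 2 thus ?thesis unfolding LS_def lvlD_mid[OF 2] by (auto simp: beC_def)
    qed
  qed
  have lu: "?l u \<le> k" and lw: "?l w \<le> k" using u w unfolding candle_level_def by auto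
  note S = gent_sq[of ?V ?l "alD k" beC "\<lambda>_. 0" 0 u w, OF finite_atLeastAtMost]
  show ?thesis
  proof (cases "?l w = ?l u + 2")
    case True
    hence "1 \<le> ?l u + 1" "?l u + 1 < k" using lw by auto
    moreover have "u \<noteq> w" using True by auto
    ultimately show ?thesis using True ab by (unfold S, simp)
  next
    case F1: False
    show ?thesis
    proof (cases "?l u = ?l w + 2")
      case True
      hence "1 \<le> ?l u - 1" "?l u - 1 < k" using lu by auto
      moreover have "u \<noteq> w" using True by auto
      ultimately show ?thesis using True ab by (unfold S, simp)
    next
      case F2: False
      show ?thesis
      proof (cases "?l u = ?l w")
        case False
        hence "u \<noteq> w" by auto
        thus ?thesis using False F1 F2 by (unfold S, simp)
      next
        case True
        consider "?l u = 0" | "1 \<le> ?l u" "?l u < k" | "?l u = k" using lu by linarith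
        thus ?thesis
        proof cases
          case 1
          hence "u = 1" "w = 1" using u w True unfolding candle_level_def by auto
          have "beC 1 = 1" by (simp add: beC_def)
          moreover have "LS ?l ?V 1 (\<lambda>v. alD k v * alD k v) = 1" using aa[of 1] k by simp
          ultimately show ?thesis unfolding S using 1 True \<open>u = 1\<close> \<open>w = 1\<close> by simp
        next
          case 2
          obtain L where L: "?l u = L" by blast
          have disj: "u = 2 * L \<or> u = 2 * L + 1" "w = 2 * L \<or> w = 2 * L + 1"
            using True L unfolding candle_level_def by auto
          have A1: "LS ?l ?V (?l u + 1) (\<lambda>v. alD k v * alD k v) = 1" using aa[of "?l u + 1"] 2 by simp
          have B1: "LS ?l ?V (?l u - 1) (\<lambda>v. beC v * beC v) = 1" using bb 2 by simp
          have "2 * L \<noteq> 2 * k" "2 * L \<noteq> 1" "2 * L + 1 \<noteq> 2 * k" "2 * L + 1 \<noteq> 1" using 2 L by auto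
          hence key: "beC u * beC w + alD k u * alD k w = (if u = w then 1 else 0)"
            using disj by (elim disjE) (simp_all add: alD_def beC_def)
          show ?thesis unfolding S using 2 True A1 B1 key by simp
        next
          case 3
          hence "u = 2*k" "w = 2*k" using u w True unfolding candle_level_def by auto
          have "alD k (2*k) = 1" by (simp add: alD_def)
          moreover have "LS ?l ?V (k - 1) (\<lambda>v. beC v * beC v) = 1" using bb k by simp
          moreover have "LS ?l ?V (k + 1) (\<lambda>v. alD k v * alD k v) = 0" using aa[of "k+1"] by simp
          ultimately show ?thesis unfolding S using 3 True \<open>u = 2*k\<close> \<open>w = 2*k\<close> k by simp
        qed
      qed
    qed
  qed
qed

lemma lvlS_mid: "1 \<le> L \<Longrightarrow> L \<le> k \<Longrightarrow> {v\<in>{1..2*k+1}. candle_level v = L} = {2*L, 2*L+1}"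
  unfolding candle_level_def by auto
lemma lvlS_0: "{v\<in>{1..2*k+1}. candle_level v = 0} = {1}"
  unfolding candle_level_def by auto
lemma lvlS_big: "k < L \<Longrightarrow> {v\<in>{1..2*k+1}. candle_level v = L} = {}"
  unfolding candle_level_def by auto

definition alS :: "nat \<Rightarrow> real" where
  "alS v = (if even v then 3/5 else 4/5)"

lemma MS_sq:
  assumes k: "k \<ge> 1" and u: "u \<in> {1..2*k+1}" and w: "w \<in> {1..2*k+1}"
  shows "(\<Sum>v\<in>{1..2*k+1}. gent candle_level alS beC beC k u v * gent candle_level alS beC beC k v w)
     = (if u = w then 1 else 0)"
proof -
  let ?l = candle_level
  let ?V = "{1..2*k+1}"
  have ab: "LS ?l ?V L (\<lambda>v. alS v * beC v) = 0" "LS ?l ?V L (\<lambda>v. beC v * alS v) = 0"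
    if "1 \<le> L" "L \<le> k" for L
    using that unfolding LS_def lvlS_mid[OF that] by (auto simp: alS_def beC_def)
  have aa: "LS ?l ?V L (\<lambda>v. alS v * alS v) = (if L > k then 0 else 1)" if L1: "1 \<le> L" for L
  proof -
    consider "1 \<le> L" "L \<le> k" | "L > k" using L1 by linarith
    thus ?thesis
    proof cases
      case 1 thus ?thesis unfolding LS_def lvlS_mid[OF 1] by (auto simp: alS_def)
    next
      case 2 thus ?thesis unfolding LS_def lvlS_big[OF 2] by auto
    qed
  qed
  have bb: "LS ?l ?V L (\<lambda>v. beC v * beC v) = 1" if L1: "L \<le> k" for L
  proof -
    consider "L = 0" | "1 \<le> L" "L \<le> k" using L1 by linarith
    thus ?thesis
    proof cases
      case 1 thus ?thesis unfolding LS_def 1 lvlS_0 by (auto simp: beC_def)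
    next
      case 2 thus ?thesis unfolding LS_def lvlS_mid[OF 2] by (auto simp: beC_def)
    qed
  qed
  have lu: "?l u \<le> k" and lw: "?l w \<le> k" using u w unfolding candle_level_def by auto
  note S = gent_sq[of ?V ?l alS beC beC k u w, OF finite_atLeastAtMost]
  have abk: "LS ?l ?V k (\<lambda>v. alS v * beC v) = 0" "LS ?l ?V k (\<lambda>v. beC v * alS v) = 0"
    using ab[of k] k by auto
  show ?thesis
  proof (cases "?l w = ?l u + 2")
    case True
    hence "1 \<le> ?l u + 1" "?l u + 1 \<le> k" using lw by auto
    moreover have "u \<noteq> w" using True by auto
    ultimately show ?thesis using True ab by (unfold S, simp)
  next
    case F1: False
    show ?thesis
    proof (cases "?l u = ?l w + 2")
      case True
      hence "1 \<le> ?l u - 1" "?l u - 1 \<le> k" using lu by auto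
      moreover have "u \<noteq> w" using True by auto
      ultimately show ?thesis using True ab by (unfold S, simp)
    next
      case F2: False
      show ?thesis
      proof (cases "?l u = ?l w")
        case False
        hence "u \<noteq> w" by auto
        thus ?thesis using False F1 F2 abk lu lw by (unfold S, simp)
      next
        case True
        consider "?l u = 0" | "1 \<le> ?l u" "?l u \<le> k" using lu by linarith
        thus ?thesis
        proof cases
          case 1
          hence "u = 1" "w = 1" using u w True unfolding candle_level_def by auto
          have "beC 1 = 1" by (simp add: beC_def)
          moreover have "LS ?l ?V 1 (\<lambda>v. alS v * alS v) = 1" using aa[of 1] k by simp
          ultimately show ?thesis unfolding S using 1 True \<open>u = 1\<close> \<open>w = 1\<close> k by simp
        next
          case 2
          obtain L where L: "?l u = L" by blast
          have disj: "u = 2 * L \<or> u = 2 * L + 1" "w = 2 * L \<or> w = 2 * L + 1"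
            using True L unfolding candle_level_def by auto
          have B1: "LS ?l ?V (?l u - 1) (\<lambda>v. beC v * beC v) = 1" using bb 2 by simp
          have "2 * L \<noteq> 1" "2 * L + 1 \<noteq> 1" using 2 L by auto
          hence key: "beC u * beC w + alS u * alS w = (if u = w then 1 else 0)"
            using disj by (elim disjE) (simp_all add: alS_def beC_def)
          show ?thesis
          proof (cases "L = k")
            case False
            have A1: "LS ?l ?V (?l u + 1) (\<lambda>v. alS v * alS v) = 1" using aa[of "?l u + 1"] 2 L False by simp
            show ?thesis unfolding S using 2 True A1 B1 key L False by simp
          next
            case Lk: True
            have A1: "LS ?l ?V (?l u + 1) (\<lambda>v. alS v * alS v) = 0" using aa[of "?l u + 1"] 2 L Lk by simp
            have C1: "LS ?l ?V k (\<lambda>v. beC v * beC v) = 1" using bb by simp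
            show ?thesis unfolding S using 2 True A1 B1 C1 key L Lk by (simp add: algebra_simps)
          qed
        qed
      qed
    qed
  qed
qed


lemma mat_from_sq:
  fixes f :: "nat \<Rightarrow> nat \<Rightarrow> real"
  assumes sq: "\<And>u w. u \<in> {1..n} \<Longrightarrow> w \<in> {1..n} \<Longrightarrow> (\<Sum>v\<in>{1..n}. f u v * f v w) = (if u = w then 1 else 0)"
    and sy: "\<And>u v. f u v = f v u"
  shows "mat n n (\<lambda>(i,j). f (i+1) (j+1)) \<in> carrier_mat n n"
    "transpose_mat (mat n n (\<lambda>(i,j). f (i+1) (j+1))) = mat n n (\<lambda>(i,j). f (i+1) (j+1))"
    "mat n n (\<lambda>(i,j). f (i+1) (j+1)) * mat n n (\<lambda>(i,j). f (i+1) (j+1)) = 1\<^sub>m n"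
proof -
  let ?M = "mat n n (\<lambda>(i,j). f (i+1) (j+1))"
  show "?M \<in> carrier_mat n n" by simp
  show "transpose_mat ?M = ?M" by (rule eq_matI) (auto simp: sy)
  show "?M * ?M = 1\<^sub>m n"
  proof (rule eq_matI)
    fix i j assume "i < dim_row (1\<^sub>m n :: real mat)" "j < dim_col (1\<^sub>m n :: real mat)"
    hence i: "i < n" and j: "j < n" by auto
    have "(?M * ?M) $$ (i,j) = (\<Sum>l\<in>{0..<n}. f (Suc i) (Suc l) * f (Suc l) (Suc j))"
      using i j by (simp add: scalar_prod_def)
    also have "\<dots> = (\<Sum>v\<in>{Suc 0..<Suc n}. f (Suc i) v * f v (Suc j))"
      by (rule sum.shift_bounds_Suc_ivl[symmetric])
    also have "{Suc 0..<Suc n} = {1..n}" by auto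
    also have "(\<Sum>v\<in>{1..n}. f (Suc i) v * f v (Suc j)) = (if Suc i = Suc j then 1 else 0)"
      using i j by (intro sq) auto
    finally show "(?M * ?M) $$ (i,j) = 1\<^sub>m n $$ (i,j)" using i j by simp
  qed auto
qed

lemma gent_sym: "gent lev al be ga K u v = gent lev al be ga K v u"
  unfolding gent_def dp_def by (auto simp: algebra_simps)

lemma gent_nz:
  assumes "al u \<noteq> 0" "al v \<noteq> 0" "be u \<noteq> 0" "be v \<noteq> 0"
  shows "gent lev al be ga K u v \<noteq> 0 \<longleftrightarrow>
     (lev v = lev u + 1 \<or> lev u = lev v + 1 \<or> (lev u = K \<and> lev v = K \<and> ga u * ga v \<noteq> 0))"
  using assms unfolding gent_def xp_def dp_def by auto

lemma inS_G:
  fixes f :: "nat \<Rightarrow> nat \<Rightarrow> real"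
  assumes "\<And>u v. f u v = f v u"
    and "\<And>u v. u \<in> {1..n} \<Longrightarrow> v \<in> {1..n} \<Longrightarrow> u \<noteq> v \<Longrightarrow> (f u v \<noteq> 0 \<longleftrightarrow> E u v)"
  shows "mat n n (\<lambda>(i,j). f (i+1) (j+1)) \<in> S_G n E"
proof -
  let ?M = "mat n n (\<lambda>(i,j). f (i+1) (j+1))"
  have "transpose_mat ?M = ?M" by (rule eq_matI) (auto simp: assms(1))
  moreover have "\<forall>i\<in>{1..n}. \<forall>j\<in>{1..n}. i \<noteq> j \<longrightarrow> (?M $$ (i - 1, j - 1) \<noteq> 0 \<longleftrightarrow> E i j)"
  proof (intro ballI impI)
    fix i j assume i: "i \<in> {1..n}" and j: "j \<in> {1..n}" and ij: "i \<noteq> j"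
    have "?M $$ (i - 1, j - 1) = f i j" using i j by auto
    thus "?M $$ (i - 1, j - 1) \<noteq> 0 \<longleftrightarrow> E i j" using assms(2)[OF i j ij] by simp
  qed
  ultimately show ?thesis unfolding S_G_def by simp
qed

lemma eigs_of_invol:
  fixes A :: "real mat"
  assumes A: "A \<in> carrier_mat n n" and sq: "A * A = 1\<^sub>m n" and ev: "eigenvalue A c"
  shows "c \<in> {1, -1}"
proof -
  from ev obtain v where v: "v \<in> carrier_vec n" "v \<noteq> 0\<^sub>v n" "A *\<^sub>v v = c \<cdot>\<^sub>v v"
    unfolding eigenvalue_def eigenvector_def using A by auto
  have "v = (A * A) *\<^sub>v v" using sq v by simp
  also have "\<dots> = A *\<^sub>v (A *\<^sub>v v)" using A v by (simp add: assoc_mult_mat_vec)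
  also have "\<dots> = c \<cdot>\<^sub>v (c \<cdot>\<^sub>v v)" using A v by (simp add: mult_mat_vec)
  finally have eq: "v = c \<cdot>\<^sub>v (c \<cdot>\<^sub>v v)" .
  obtain i where i: "i < n" "v $ i \<noteq> 0" using v
    by (metis eq_vecI carrier_vecD index_zero_vec(1) index_zero_vec(2))
  have "v $ i = c * (c * v $ i)" using arg_cong[OF eq, of "\<lambda>x. x $ i"] i v by simp
  hence "c * c = 1" using i by (metis mult.assoc mult_cancel_right2)
  thus ?thesis by (metis insert_iff mult_cancel_left1 square_eq_1_iff)
qed

lemma q_G_two:
  assumes A0: "A0 \<in> S_G n E" and sq: "A0 * A0 = 1\<^sub>m n" and E: "E 1 2" and n: "n \<ge> 2"
  shows "q_G n E = 2"
proof -
  have lb: "num_distinct_eigs A \<ge> 2" if A: "A \<in> S_G n E" for A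
  proof -
    from A have Ac: "A \<in> carrier_mat n n" and sy: "transpose_mat A = A"
      and adj: "\<And>i j. i\<in>{1..n} \<Longrightarrow> j\<in>{1..n} \<Longrightarrow> i \<noteq> j \<Longrightarrow> (A $$ (i - 1, j - 1) \<noteq> 0 \<longleftrightarrow> E i j)"
      unfolding S_G_def by auto
    have "A $$ (1 - 1, 2 - 1) \<noteq> 0" using adj[of 1 2] E n by auto
    hence "A $$ (0, 1) \<noteq> 0" by simp
    from two_eigs[OF Ac sy _ _ _ this] n show ?thesis unfolding num_distinct_eigs_def by auto
  qed
  have A0c: "A0 \<in> carrier_mat n n" using A0 unfolding S_G_def by auto
  have "finite {c. eigenvalue A0 c} \<and> card {c. eigenvalue A0 c} \<ge> 2"
    using lb[OF A0] A0 unfolding num_distinct_eigs_def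
    by (metis card.infinite not_numeral_le_zero)
  moreover have "{c. eigenvalue A0 c} \<subseteq> {1, -1}" using eigs_of_invol[OF A0c sq] by auto
  ultimately have "card {c. eigenvalue A0 c} \<le> card {1, -1::real}"
    by (intro card_mono) auto
  hence "num_distinct_eigs A0 = 2" using lb[OF A0] unfolding num_distinct_eigs_def by simp
  hence ex: "\<exists>A\<in>S_G n E. num_distinct_eigs A = 2" using A0 by blast
  show ?thesis unfolding q_G_def
    by (rule Least_equality) (use ex lb in auto)
qed

lemma alD_nz: "alD k u \<noteq> 0" and beC_nz: "beC u \<noteq> 0" and alS_nz: "alS u \<noteq> 0"
  unfolding alD_def beC_def alS_def by auto

lemma dmat:
  assumes k: "k \<ge> 2"
  shows "\<exists>A\<in>S_G (2*k) (dcandle k). A * A = 1\<^sub>m (2*k) \<and> transpose_mat A = A"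
proof -
  let ?f = "gent candle_level (alD k) beC (\<lambda>_. 0) 0"
  note M = mat_from_sq[of "2*k" ?f, OF MD_sq[OF k] gent_sym]
  have "mat (2*k) (2*k) (\<lambda>(i,j). ?f (i+1) (j+1)) \<in> S_G (2*k) (dcandle k)"
  proof (rule inS_G[OF gent_sym])
    fix u v assume u: "u \<in> {1..2*k}" and v: "v \<in> {1..2*k}" and "u \<noteq> v"
    show "?f u v \<noteq> 0 \<longleftrightarrow> dcandle k u v"
      unfolding gent_nz[OF alD_nz alD_nz beC_nz beC_nz] dcandle_def using u v by auto
  qed
  thus ?thesis using M by blast
qed

lemma smat:
  assumes k: "k \<ge> 1"
  shows "\<exists>A\<in>S_G (2*k+1) (scandle k). A * A = 1\<^sub>m (2*k+1)"
proof -
  let ?f = "gent candle_level alS beC beC k"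
  note M = mat_from_sq[of "2*k+1" ?f, OF MS_sq[OF k] gent_sym]
  have "mat (2*k+1) (2*k+1) (\<lambda>(i,j). ?f (i+1) (j+1)) \<in> S_G (2*k+1) (scandle k)"
  proof (rule inS_G[OF gent_sym])
    fix u v assume u: "u \<in> {1..2*k+1}" and v: "v \<in> {1..2*k+1}" and uv: "u \<noteq> v"
    have "(candle_level u = k \<and> candle_level v = k) \<longleftrightarrow> {u, v} = {2*k, 2*k+1}"
      using u v uv unfolding candle_level_def by (auto simp: doubleton_eq_iff)
    thus "?f u v \<noteq> 0 \<longleftrightarrow> scandle k u v"
      unfolding gent_nz[OF alS_nz alS_nz beC_nz beC_nz] scandle_def using u v beC_nz
      by auto
  qed
  thus ?thesis using M by blast
qed

theorem mainTheorem2: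
  shows "(\<forall>k::nat. k \<ge> 2 \<longrightarrow>
            q_G (2*k) (dcandle k) = 2 \<and> q_G (2*k+1) (scandle k) = 2)
       \<and> q_G 3 (scandle 1) = 2
       \<and> (\<forall>k::nat. k \<ge> 2 \<longrightarrow>
            (\<exists>A\<in>S_G (2*k) (dcandle k). A * transpose_mat A = 1\<^sub>m (2*k)))"
proof (intro conjI allI impI)
  fix k :: nat assume k: "k \<ge> 2"
  from dmat[OF k] obtain A where A: "A \<in> S_G (2*k) (dcandle k)" "A * A = 1\<^sub>m (2*k)"
    "transpose_mat A = A" by blast
  show "q_G (2*k) (dcandle k) = 2"
    by (rule q_G_two[OF A(1,2)]) (use k in \<open>auto simp: dcandle_def candle_level_def\<close>)
  show "\<exists>A\<in>S_G (2*k) (dcandle k). A * transpose_mat A = 1\<^sub>m (2*k)"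
    using A by metis
  from smat[of k] k obtain B where B: "B \<in> S_G (2*k+1) (scandle k)" "B * B = 1\<^sub>m (2*k+1)" by auto
  show "q_G (2*k+1) (scandle k) = 2"
    by (rule q_G_two[OF B]) (use k in \<open>auto simp: scandle_def candle_level_def\<close>)
next
  from smat[of 1] obtain B where B: "B \<in> S_G 3 (scandle 1)" "B * B = 1\<^sub>m 3" by auto
  show "q_G 3 (scandle 1) = 2"
    by (rule q_G_two[OF B]) (auto simp: scandle_def candle_level_def)
qed

end
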